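(* Let $\mu=(\mu_1,\mu_2,\dots,\mu_m)$ be a composition of $n$, let $\lambda\vdash n$ and let $T$ be a standard Young tableau of shape $\lambda$. The probability that a $\mu$ shuffle has RSK recording tableau $T$ equals $K_{\lambda\mu}\big/\binom{n}{\mu_1,\mu_2,\dots,\mu_m}$.
   Context: A $\mu$ shuffle of $n$ cards: break the deck into consecutive piles of sizes $\mu_1,\mu_2,\dots$ and choose uniformly at random one of the $\binom{n}{\mu_1,\mu_2,\dots}$ interleavings of the piles. Concretely, the resulting permutation $w$ is obtained from a uniformly random word with exactly $\mu_i$ occurrences of the letter $i$ by placing $1,\dots,\mu_1$ at the positions of the $1$'s left to right, the next $\mu_2$ integers at the positions of the $2$'s left to right, etc.; $w(p)$ is the integer at position $p$. The RSK recording tableau is obtained by row-inserting $w(1),\dots,w(n)$. $K_{\lambda\mu}$ (Kostka number) is the number of semistandard Young tableaux of shape $\lambda$ in which $i$ appears exactly $\mu_i$ times. *)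

theory Defs
  imports Complex_Main "HOL-Library.Multiset"
begin

text \<open>Tableaux are lists of rows (top row first); a shape is the list of row lengths.\<close>

definition is_composition :: "nat list \<Rightarrow> nat \<Rightarrow> bool" where
  "is_composition mu n \<longleftrightarrow> (\<forall>x\<in>set mu. 0 < x) \<and> sum_list mu = n"

definition is_partition :: "nat list \<Rightarrow> nat \<Rightarrow> bool" where
  "is_partition lam n \<longleftrightarrow> (\<forall>x\<in>set lam. 0 < x) \<and> sorted_wrt (\<ge>) lam \<and> sum_list lam = n"

definition shape :: "nat list list \<Rightarrow> nat list" where
  "shape T = map length T"

definition cols_strict :: "nat list list \<Rightarrow> bool" where
  "cols_strict T \<longleftrightarrow> (\<forall>i j. Suc i < length T \<and> j < length (T ! Suc i) \<longrightarrow> T ! i ! j < T ! Suc i ! j)"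

definition is_SYT :: "nat list \<Rightarrow> nat list list \<Rightarrow> bool" where
  "is_SYT lam T \<longleftrightarrow> shape T = lam \<and> (\<forall>r\<in>set T. sorted_wrt (<) r) \<and> cols_strict T
     \<and> mset (concat T) = mset [1..<sum_list lam + 1]"

definition is_SSYT :: "nat list \<Rightarrow> nat list \<Rightarrow> nat list list \<Rightarrow> bool" where
  "is_SSYT lam mu T \<longleftrightarrow> shape T = lam \<and> (\<forall>r\<in>set T. sorted r) \<and> cols_strict T
     \<and> set (concat T) \<subseteq> {1..length mu}
     \<and> (\<forall>i\<in>{1..length mu}. count_list (concat T) i = mu ! (i - 1))"

definition kostka :: "nat list \<Rightarrow> nat list \<Rightarrow> nat" where
  "kostka lam mu = card {T. is_SSYT lam mu T}"

definition multinomial :: "nat list \<Rightarrow> nat" where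
  "multinomial mu = fact (sum_list mu) div (\<Prod>x\<leftarrow>mu. fact x)"

fun row_bump :: "nat list \<Rightarrow> nat \<Rightarrow> nat list \<times> nat option" where
  "row_bump [] x = ([x], None)"
| "row_bump (y # ys) x = (if x < y then (x # ys, Some y)
                          else (let (ys', b) = row_bump ys x in (y # ys', b)))"

text \<open>Insert into a tableau; returns the new tableau and the (0-based) row of the new cell.\<close>
fun rs_insert :: "nat list list \<Rightarrow> nat \<Rightarrow> nat list list \<times> nat" where
  "rs_insert [] x = ([[x]], 0)"
| "rs_insert (r # rs) x = (case row_bump r x of
      (r', None) \<Rightarrow> (r' # rs, 0)
    | (r', Some y) \<Rightarrow> (let (rs', k) = rs_insert rs y in (r' # rs', Suc k)))"

definition add_to_row :: "nat list list \<Rightarrow> nat \<Rightarrow> nat \<Rightarrow> nat list list" where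
  "add_to_row Q k v = (if k < length Q then Q[k := Q ! k @ [v]] else Q @ [[v]])"

definition rsk_step :: "nat list list \<times> nat list list \<Rightarrow> nat \<times> nat \<Rightarrow> nat list list \<times> nat list list" where
  "rsk_step PQ px = (let (P, Q) = PQ; (p, x) = px; (P', k) = rs_insert P x
                     in (P', add_to_row Q k p))"

definition rsk :: "nat list \<Rightarrow> nat list list \<times> nat list list" where
  "rsk w = foldl rsk_step ([], []) (zip [1..<length w + 1] w)"

definition recording_tableau :: "nat list \<Rightarrow> nat list list" where
  "recording_tableau w = snd (rsk w)"

definition shuffle_words :: "nat list \<Rightarrow> nat list set" where
  "shuffle_words mu = {a. length a = sum_list mu \<and> set a \<subseteq> {1..length mu}
       \<and> (\<forall>i\<in>{1..length mu}. count_list a i = mu ! (i - 1))}"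

text \<open>Permutation (one-line notation, list of w(1..n)) associated with a word a:
  the j-th occurrence (from the left) of letter i receives mu_1+...+mu_(i-1)+j.\<close>
definition shuffle_perm :: "nat list \<Rightarrow> nat list \<Rightarrow> nat list" where
  "shuffle_perm mu a = map (\<lambda>p. sum_list (take (a ! p - 1) mu) + count_list (take (Suc p) a) (a ! p))
                           [0..<length a]"

definition shuffle_prob :: "nat list \<Rightarrow> nat list list \<Rightarrow> real" where
  "shuffle_prob mu T = real (card {a \<in> shuffle_words mu. recording_tableau (shuffle_perm mu a) = T})
                       / real (card (shuffle_words mu))"

end

theory Submission
  imports Defs "HOL-Combinatorics.Multiset_Permutations"
begin

definition crel :: "nat list \<Rightarrow> nat list \<Rightarrow> bool" where
  "crel r1 r2 \<longleftrightarrow> length r2 \<le> length r1 \<and> (\<forall>j<length r2. r1!j < r2!j)"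

fun vt :: "nat list list \<Rightarrow> bool" where
  "vt [] = True"
| "vt [r] = (r \<noteq> [] \<and> sorted r)"
| "vt (r1 # r2 # rs) = (r1 \<noteq> [] \<and> sorted r1 \<and> crel r1 r2 \<and> vt (r2 # rs))"

definition addc :: "nat list \<Rightarrow> nat \<Rightarrow> nat list" where
  "addc sh k = (if k < length sh then sh[k := sh!k + 1] else sh @ [1])"

lemma rb_some:
  "row_bump r x = (r', Some y) \<Longrightarrow>
   \<exists>c<length r. r' = r[c:=x] \<and> y = r!c \<and> (\<forall>j<c. r!j \<le> x) \<and> x < r!c"
proof (induction r arbitrary: r')
  case Nil then show ?case by simp
next
  case (Cons z zs)
  show ?case
  proof (cases "x < z")
    case True then show ?thesis using Cons.prems by (intro exI[of _ 0]) auto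
  next
    case False
    then obtain zs' where z: "row_bump zs x = (zs', Some y)" "r' = z # zs'"
      using Cons.prems by (auto split: prod.splits)
    from Cons.IH[OF z(1)] obtain c where c: "c<length zs" "zs' = zs[c:=x]" "y = zs!c"
      "\<forall>j<c. zs!j \<le> x" "x < zs!c" by blast
    show ?thesis
      apply (rule exI[of _ "Suc c"])
      using c z False by (auto simp: less_Suc_eq_0_disj)
  qed
qed

lemma rb_none:
  "row_bump r x = (r', None) \<Longrightarrow> r' = r@[x] \<and> (\<forall>j<length r. r!j \<le> x)"
proof (induction r arbitrary: r')
  case Nil then show ?case by simp
next
  case (Cons z zs)
  show ?case
  proof (cases "x < z")
    case True then show ?thesis using Cons.prems by auto
  next
    case False
    then obtain zs' where z: "row_bump zs x = (zs', None)" "r' = z # zs'"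
      using Cons.prems by (auto split: prod.splits)
    from Cons.IH[OF z(1)] show ?thesis using z False by (auto simp: less_Suc_eq_0_disj)
  qed
qed

lemma rb_eq_some:
  "c < length r \<Longrightarrow> (\<forall>j<c. r!j \<le> x) \<Longrightarrow> x < r!c \<Longrightarrow> row_bump r x = (r[c:=x], Some (r!c))"
proof (induction r arbitrary: c)
  case Nil then show ?case by simp
next
  case (Cons z zs)
  show ?case
  proof (cases c)
    case 0 then show ?thesis using Cons.prems by simp
  next
    case (Suc c')
    have "z \<le> x" using Cons.prems Suc by auto
    moreover have "row_bump zs x = (zs[c':=x], Some (zs!c'))"
      using Cons.prems Suc by (intro Cons.IH) auto
    ultimately show ?thesis using Suc by auto
  qed
qed

lemma rb_eq_none:
  "(\<forall>j<length r. r!j \<le> x) \<Longrightarrow> row_bump r x = (r@[x], None)"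
proof (induction r)
  case Nil then show ?case by simp
next
  case (Cons z zs)
  have "z \<le> x" using Cons.prems by auto
  moreover have "row_bump zs x = (zs@[x], None)"
    using Cons.prems by (intro Cons.IH) auto
  ultimately show ?case by auto
qed

lemma rb_fst_len: "length (fst (row_bump r x)) = (case snd (row_bump r x) of None \<Rightarrow> Suc (length r) | Some _ \<Rightarrow> length r)"
  by (cases "row_bump r x"; cases "snd (row_bump r x)") (auto dest!: rb_some rb_none)

lemma sorted_upd:
  assumes "sorted r" "c < length r" "\<forall>j<c. r!j \<le> x" "x < r!c"
  shows "sorted (r[c:=x])"
  unfolding sorted_iff_nth_mono
proof (intro allI impI)
  fix i j assume ij: "i \<le> j" "j < length (r[c:=x])"
  have m: "\<And>i j. i \<le> j \<Longrightarrow> j < length r \<Longrightarrow> r!i \<le> r!j" using assms(1) by (simp add: sorted_iff_nth_mono)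
  show "r[c:=x]!i \<le> r[c:=x]!j"
    using ij assms m[of c j] m[of i j] by (auto simp: nth_list_update)
qed

lemma sorted_snoc_le: "sorted r \<Longrightarrow> (\<forall>j<length r. r!j \<le> x) \<Longrightarrow> sorted (r@[x])"
  by (auto simp: sorted_append in_set_conv_nth)

lemma L1:
  assumes "crel r1 r2" "row_bump r1 x = (r1', Some y)" "row_bump r2 y = (r2', b)"
  shows "crel r1' r2'"
proof -
  from rb_some[OF assms(2)] obtain c where c: "c<length r1" "r1' = r1[c:=x]" "y = r1!c"
     "\<forall>j<c. r1!j \<le> x" "x < r1!c" by blast
  have cx: "\<forall>j<c. r1!j < r1!c" using c by (meson le_less_trans)
  have cr: "length r2 \<le> length r1" "\<forall>j<length r2. r1!j < r2!j" using assms(1) by (auto simp: crel_def)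
  show ?thesis
  proof (cases b)
    case None
    from rb_none assms(3) None have n: "r2' = r2@[y]" "\<forall>j<length r2. r2!j \<le> y" by auto
    have "length r2 \<le> c"
    proof (rule ccontr)
      assume "\<not> length r2 \<le> c"
      then have "r2!c \<le> y" "r1!c < r2!c" using n cr by auto
      then show False using c by simp
    qed
    show ?thesis unfolding crel_def
    proof (intro conjI allI impI)
      show "length r2' \<le> length r1'" using c n \<open>length r2 \<le> c\<close> by simp
      fix j assume j: "j < length r2'"
      show "r1' ! j < r2' ! j"
      proof (cases "j = length r2")
        case True
        then show ?thesis
        proof (cases "j = c")
          case False
          then have "r1 ! j \<le> x" using c \<open>length r2 \<le> c\<close> True by auto
          then show ?thesis using False True c n by (auto simp: nth_list_update nth_append)
        qed (use c n in \<open>auto simp: nth_list_update nth_append\<close>)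
      next
        case False
        then have "j < length r2" using j n by simp
        then show ?thesis using c n cr \<open>length r2 \<le> c\<close>
          by (auto simp: nth_list_update nth_append)
      qed
    qed
  next
    case (Some z)
    from rb_some assms(3) Some obtain d where d: "d<length r2" "r2' = r2[d:=y]" "z = r2!d"
      "\<forall>j<d. r2!j \<le> y" "y < r2!d" by blast
    have "d \<le> c"
    proof (rule ccontr)
      assume "\<not> d \<le> c"
      then have "r2!c \<le> y" "r1!c < r2!c" using d cr by auto
      then show False using c by simp
    qed
    show ?thesis unfolding crel_def
    proof (intro conjI allI impI)
      show "length r2' \<le> length r1'" using d c cr by simp
      fix j assume j: "j < length r2'"
      show "r1' ! j < r2' ! j"
      proof (cases "j = d")
        case True
        then show ?thesis using \<open>d \<le> c\<close> c d cx
          by (cases "d = c") (auto simp: nth_list_update)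
      next
        case False
        then show ?thesis using c d cr j
          by (cases "j = c") (auto simp: nth_list_update intro: less_trans)
      qed
    qed
  qed
qed

lemma addc_Cons_Suc: "addc (a # sh) (Suc k) = a # addc sh k"
  by (auto simp: addc_def)
lemma addc_Cons_0: "addc (a # sh) 0 = Suc a # sh"
  by (auto simp: addc_def)
lemma addc_ne: "addc sh k \<noteq> []" by (auto simp: addc_def)

lemma crel_snoc: "crel r r2 \<Longrightarrow> crel (r@[x]) r2"
  by (auto simp: crel_def nth_append)

lemma crel_single:
  assumes "row_bump r x = (r', Some y)" shows "crel r' [y]"
proof -
  from rb_some[OF assms] obtain c where c: "c<length r" "r' = r[c:=x]" "y = r!c"
     "\<forall>j<c. r!j \<le> x" "x < r!c" by blast
  show ?thesis using c by (cases c) (auto simp: crel_def nth_list_update Suc_le_eq intro: le_less_trans)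
qed

lemma vt_Cons: "vt (r # rs) \<longleftrightarrow> r \<noteq> [] \<and> sorted r \<and> vt rs \<and> (rs \<noteq> [] \<longrightarrow> crel r (hd rs))"
  by (cases rs) auto

lemma ins_vt:
  "vt P \<Longrightarrow> rs_insert P x = (P', k) \<Longrightarrow>
   vt P' \<and> shape P' = addc (shape P) k \<and> mset (concat P') = mset (concat P) + {#x#} \<and> k \<le> length P"
proof (induction P arbitrary: x P' k)
  case Nil then show ?case by (auto simp: shape_def addc_def)
next
  case (Cons r rs)
  have v: "r \<noteq> []" "sorted r" "vt rs" "rs \<noteq> [] \<Longrightarrow> crel r (hd rs)"
    using Cons.prems(1) vt_Cons by auto
  obtain r' b where rb: "row_bump r x = (r', b)" by fastforce
  show ?case
  proof (cases b)
    case None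
    with rb_none rb have r': "r' = r@[x]" "\<forall>j<length r. r!j \<le> x" by auto
    have e: "P' = r' # rs" "k = 0" using Cons.prems(2) rb None by auto
    have "vt P'" unfolding e vt_Cons using v r' sorted_snoc_le crel_snoc by auto
    then show ?thesis using e r' by (auto simp: shape_def addc_Cons_0)
  next
    case (Some y)
    obtain rs' k' where ri: "rs_insert rs y = (rs', k')" by fastforce
    have e: "P' = r' # rs'" "k = Suc k'" using Cons.prems(2) rb Some ri by auto
    from Cons.IH[OF v(3) ri] have IH: "vt rs'" "shape rs' = addc (shape rs) k'"
      "mset (concat rs') = mset (concat rs) + {#y#}" "k' \<le> length rs" by auto
    from rb_some rb Some obtain c where c: "c<length r" "r' = r[c:=x]" "y = r!c"
     "\<forall>j<c. r!j \<le> x" "x < r!c" by blast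
    have s: "sorted r'" using sorted_upd[OF v(2) c(1) c(4) c(5)] c by simp
    have rs'ne: "rs' \<noteq> []" using IH(2) addc_ne[of "shape rs" k'] by (auto simp: shape_def)
    have cr: "crel r' (hd rs')"
    proof (cases rs)
      case Nil
      then have "rs' = [[y]]" using ri by simp
      then show ?thesis using crel_single rb Some by simp
    next
      case (Cons r2 rs2)
      obtain r2' b2 where rb2: "row_bump r2 y = (r2', b2)" by fastforce
      have "hd rs' = r2'" using ri rb2 Cons by (cases b2) (auto split: prod.splits)
      then show ?thesis using L1[OF _ rb[unfolded Some] rb2] v(4) Cons by simp
    qed
    have "vt P'" unfolding e vt_Cons using s cr IH rs'ne c v by auto
    moreover have "mset (concat P') = mset (concat (r # rs)) + {#x#}"
      using e IH c by (simp add: mset_update)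
    moreover have "shape P' = addc (shape (r # rs)) k"
      using e IH c by (simp add: shape_def addc_Cons_Suc)
    ultimately show ?thesis using IH e by simp
  qed
qed

lemma sorted_nth_mono': "sorted r \<Longrightarrow> i \<le> j \<Longrightarrow> j < length r \<Longrightarrow> r!i \<le> r!j"
  by (simp add: sorted_iff_nth_mono)

lemma rb_inj:
  assumes "sorted r" "sorted r2" "length r = length r2"
    "row_bump r x = (r', Some y)" "row_bump r2 x2 = (r', Some y)"
  shows "r = r2 \<and> x = x2"
proof -
  from rb_some[OF assms(4)] obtain c where c: "c<length r" "r' = r[c:=x]" "y = r!c"
     "\<forall>j<c. r!j \<le> x" "x < r!c" by blast
  from rb_some[OF assms(5)] obtain d where d: "d<length r2" "r' = r2[d:=x2]" "y = r2!d"
     "\<forall>j<d. r2!j \<le> x2" "x2 < r2!d" by blast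
  have "\<not> c < d"
  proof
    assume cd: "c < d"
    have "r2!c = x" using c d cd by (metis nth_list_update_eq nth_list_update_neq less_imp_neq less_trans)
    moreover have "r!d = x2" using c d cd assms(3) by (metis nth_list_update_eq nth_list_update_neq less_imp_neq)
    moreover have "r!c \<le> r!d" using sorted_nth_mono'[OF assms(1)] cd d assms(3) by simp
    ultimately show False using c d cd by auto
  qed
  moreover have "\<not> d < c"
  proof
    assume cd: "d < c"
    have "r!d = x2" using c d cd assms(3) by (metis nth_list_update_eq nth_list_update_neq less_imp_neq less_trans)
    moreover have "r2!c = x" using c d cd assms(3) by (metis nth_list_update_eq nth_list_update_neq less_imp_neq)
    moreover have "r2!d \<le> r2!c" using sorted_nth_mono'[OF assms(2)] cd c assms(3) by simp
    ultimately show False using c d cd by auto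
  qed
  ultimately have cd: "c = d" by simp
  have "x = x2" using c d cd assms(3) by (metis nth_list_update_eq)
  moreover have "r = r2"
  proof -
    have "r = r'[c := y]" using c by simp
    also have "\<dots> = r2" using d cd by simp
    finally show ?thesis .
  qed
  ultimately show ?thesis by simp
qed

lemma ins_inj:
  "vt P \<Longrightarrow> vt P2 \<Longrightarrow> shape P = shape P2 \<Longrightarrow> rs_insert P x = (P', k) \<Longrightarrow> rs_insert P2 x2 = (P', k)
   \<Longrightarrow> P = P2 \<and> x = x2"
proof (induction P arbitrary: P2 x x2 P' k)
  case Nil
  then have "P2 = []" by (simp add: shape_def)
  then show ?case using Nil by auto
next
  case (Cons r rs)
  obtain r2 rs2 where P2: "P2 = r2 # rs2" using Cons.prems(3) by (cases P2) (auto simp: shape_def)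
  have sh: "length r = length r2" "shape rs = shape rs2" using Cons.prems(3) P2 by (auto simp: shape_def)
  have v: "sorted r" "vt rs" "sorted r2" "vt rs2" using Cons.prems(1,2) P2 vt_Cons by auto
  obtain r' b where rb: "row_bump r x = (r', b)" by fastforce
  obtain r2' b2 where rb2: "row_bump r2 x2 = (r2', b2)" by fastforce
  show ?case
  proof (cases b)
    case None
    then have e: "P' = r' # rs" "k = 0" using Cons.prems(4) rb by auto
    show ?thesis
    proof (cases b2)
      case None
      then have "P' = r2' # rs2" using Cons.prems(5) rb2 P2 by auto
      moreover have "r' = r @ [x]" "r2' = r2 @ [x2]" using rb rb2 None \<open>b = None\<close> rb_none by auto
      ultimately show ?thesis using e sh P2 by auto
    next
      case (Some y2)
      then show ?thesis using Cons.prems(5) rb2 P2 e by (auto split: prod.splits)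
    qed
  next
    case (Some y)
    obtain rs' k' where ri: "rs_insert rs y = (rs', k')" by fastforce
    have e: "P' = r' # rs'" "k = Suc k'" using Cons.prems(4) rb Some ri by auto
    show ?thesis
    proof (cases b2)
      case None
      then show ?thesis using Cons.prems(5) rb2 P2 e by auto
    next
      case (Some y2)
      obtain rs2' k2' where ri2: "rs_insert rs2 y2 = (rs2', k2')" by fastforce
      have e2: "P' = r2' # rs2'" "k = Suc k2'" using Cons.prems(5) rb2 Some ri2 P2 by auto
      have "rs = rs2 \<and> y = y2" using Cons.IH[OF v(2) v(4) sh(2) ri] ri2 e e2 by simp
      moreover have "r = r2 \<and> x = x2" using rb_inj[OF v(1) v(3) sh(1)] rb rb2 \<open>b = Some y\<close> Some e e2 calculation
        by simp
      ultimately show ?thesis using P2 by simp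
    qed
  qed
qed

definition unbump :: "nat list \<Rightarrow> nat \<Rightarrow> nat list \<times> nat" where
  "unbump r z = (let d = length (takeWhile (\<lambda>v. v < z) r) - 1 in (r[d := z], r!d))"

lemma unbump_ok:
  assumes "sorted r" "r \<noteq> []" "r!0 < z" "unbump r z = (r', x)"
  shows "row_bump r' x = (r, Some z) \<and> sorted r' \<and> length r' = length r"
proof -
  define t where "t = length (takeWhile (\<lambda>v. v < z) r)"
  have t1: "t \<ge> 1" using assms(2,3) unfolding t_def by (cases r) auto
  have tl: "t \<le> length r" unfolding t_def by (rule length_takeWhile_le)
  have lt: "\<forall>j<t. r!j < z" unfolding t_def using nth_length_takeWhile
    by (metis (mono_tags, lifting) set_takeWhileD takeWhile_nth nth_mem)
  have ge: "\<forall>j. t \<le> j \<and> j < length r \<longrightarrow> z \<le> r!j"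
  proof (intro allI impI)
    fix j assume j: "t \<le> j \<and> j < length r"
    then have "t < length r" by simp
    then have "\<not> r!t < z" unfolding t_def using nth_length_takeWhile by blast
    then show "z \<le> r!j" using sorted_nth_mono'[OF assms(1), of t j] j by simp
  qed
  define d where "d = t - 1"
  have dl: "d < length r" "d < t" using t1 tl unfolding d_def by auto
  have e: "r' = r[d := z]" "x = r!d" using assms(4) unfolding unbump_def t_def[symmetric] d_def by (auto simp: Let_def)
  have "row_bump r' x = (r'[d := x], Some (r'!d))"
  proof (rule rb_eq_some)
    show "d < length r'" using dl e by simp
    show "\<forall>j<d. r' ! j \<le> x" using e dl sorted_nth_mono'[OF assms(1)] by auto
    show "x < r'!d" using e dl lt by simp
  qed
  then have "row_bump r' x = (r, Some z)" using e dl by simp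
  moreover have "sorted r'" unfolding sorted_iff_nth_mono
  proof (intro allI impI)
    fix i j assume ij: "i \<le> j" "j < length r'"
    show "r'!i \<le> r'!j"
      using ij e dl lt ge sorted_nth_mono'[OF assms(1), of i j] unfolding d_def
      by (auto simp: nth_list_update)
  qed
  ultimately show ?thesis using e by simp
qed

lemma rev_L1:
  assumes "crel r s" "sorted r'" "sorted s'" "row_bump r' x = (r, Some y)" "row_bump s' y = (s, b)"
  shows "crel r' s'"
proof -
  from rb_some[OF assms(4)] obtain c where c: "c<length r'" "r = r'[c:=x]" "y = r'!c"
     "\<forall>j<c. r'!j \<le> x" "x < r'!c" by blast
  have cr: "length s \<le> length r" "\<forall>j<length s. r!j < s!j" using assms(1) by (auto simp: crel_def)
  have srt: "\<And>i j. i \<le> j \<Longrightarrow> j < length r' \<Longrightarrow> r'!i \<le> r'!j" using sorted_nth_mono'[OF assms(2)] by blast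
  have srt2: "\<And>i j. i \<le> j \<Longrightarrow> j < length s' \<Longrightarrow> s'!i \<le> s'!j" using sorted_nth_mono'[OF assms(3)] by blast
  show ?thesis
  proof (cases b)
    case None
    from rb_none assms(5) None have n: "s = s'@[y]" "\<forall>j<length s'. s'!j \<le> y" by auto
    have "length s' \<le> c"
    proof (rule ccontr)
      assume a: "\<not> length s' \<le> c"
      have "r!length s' < y" using cr n by (auto simp: nth_append)
      moreover have "r!length s' = r'!length s'" using a c by simp
      moreover have "r'!c \<le> r'!length s'" using srt[of c "length s'"] a c cr n by simp
      ultimately show False using c by simp
    qed
    show ?thesis unfolding crel_def
    proof (intro conjI allI impI)
      show "length s' \<le> length r'" using cr c n by simp
      fix j assume j: "j < length s'"
      then have "j \<noteq> c" "j < length s" using \<open>length s' \<le> c\<close> n by auto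
      then have "r'!j = r!j" "s'!j = s!j" using c n j by (auto simp: nth_append)
      then show "r'!j < s'!j" using cr \<open>j < length s\<close> by simp
    qed
  next
    case (Some z)
    from rb_some assms(5) Some obtain d where d: "d<length s'" "s = s'[d:=y]" "z = s'!d"
      "\<forall>j<d. s'!j \<le> y" "y < s'!d" by blast
    have "d \<le> c"
    proof (rule ccontr)
      assume a: "\<not> d \<le> c"
      have "r!d < y" using cr d by auto
      moreover have "r!d = r'!d" using a c by simp
      moreover have "r'!c \<le> r'!d" using srt[of c d] a c cr d by simp
      ultimately show False using c by simp
    qed
    show ?thesis unfolding crel_def
    proof (intro conjI allI impI)
      show "length s' \<le> length r'" using cr c d by simp
      fix j assume j: "j < length s'"
      show "r'!j < s'!j"
      proof (cases "j = c")
        case True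
        then show ?thesis using \<open>d \<le> c\<close> srt2[of d c] d c j by (cases "c = d") auto
      next
        case False
        then have rj: "r'!j = r!j" using c by simp
        show ?thesis
        proof (cases "j = d")
          case True
          then show ?thesis using rj cr d by auto
        next
          case False
          then show ?thesis using rj cr d j by auto
        qed
      qed
    qed
  qed
qed

fun rs_delete :: "nat list list \<Rightarrow> nat \<Rightarrow> nat list list \<times> nat" where
  "rs_delete [] k = ([], 0)"
| "rs_delete (r # rs) 0 = ((if butlast r = [] then rs else butlast r # rs), last r)"
| "rs_delete (r # rs) (Suc k) = (let (rs', y) = rs_delete rs k; (r', x) = unbump r y in (r' # rs', x))"

definition corner :: "nat list \<Rightarrow> nat \<Rightarrow> bool" where
  "corner sh k \<longleftrightarrow> k < length sh \<and> (Suc k < length sh \<longrightarrow> sh!Suc k < sh!k)"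

lemma ins_hd:
  assumes "rs_insert P' y = (P, k)"
  shows "P \<noteq> [] \<and> (P' = [] \<longrightarrow> P = [[y]]) \<and> (P' \<noteq> [] \<longrightarrow> fst (row_bump (hd P') y) = hd P)"
  using assms by (cases P') (auto split: prod.splits option.splits)

lemma ins_hd_mem:
  assumes "rs_insert P' y = (P, k)"
  shows "\<exists>c<length (hd P). hd P ! c = y"
proof (cases P')
  case Nil then show ?thesis using assms by auto
next
  case (Cons r rs)
  obtain r' b where rb: "row_bump r y = (r', b)" by fastforce
  have "hd P = r'" using assms rb Cons ins_hd by fastforce
  show ?thesis
  proof (cases b)
    case None
    then have "r' = r @ [y]" using rb rb_none by auto
    then show ?thesis using \<open>hd P = r'\<close> by (intro exI[of _ "length r"]) auto
  next
    case (Some z)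
    then obtain c where "c < length r" "r' = r[c:=y]" using rb rb_some by blast
    then show ?thesis using \<open>hd P = r'\<close> by (intro exI[of _ c]) auto
  qed
qed

lemma del_ok:
  "vt P \<Longrightarrow> corner (shape P) k \<Longrightarrow> rs_delete P k = (P', x) \<Longrightarrow> vt P' \<and> rs_insert P' x = (P, k)"
proof (induction P arbitrary: k P' x)
  case Nil then show ?case by (simp add: corner_def shape_def)
next
  case (Cons r rs)
  have v: "r \<noteq> []" "sorted r" "vt rs" "rs \<noteq> [] \<Longrightarrow> crel r (hd rs)"
    using Cons.prems(1) vt_Cons by auto
  show ?case
  proof (cases k)
    case 0
    have rx: "row_bump (butlast r) (last r) = (r, None)"
    proof -
      have "\<forall>j<length (butlast r). butlast r ! j \<le> last r"
        using v(1,2) by (auto simp: nth_butlast last_conv_nth intro!: sorted_nth_mono')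
      then show ?thesis using rb_eq_none v(1) by simp
    qed
    show ?thesis
    proof (cases "butlast r = []")
      case True
      have "rs = []"
      proof (rule ccontr)
        assume "rs \<noteq> []"
        then have "length (hd rs) < length r" using Cons.prems(2) 0 by (cases rs) (auto simp: corner_def shape_def)
        moreover have "length r = 1" using True v(1) by (cases r rule: rev_cases) auto
        moreover have "hd rs \<noteq> []" using \<open>rs \<noteq> []\<close> v(3) by (cases rs) (auto simp: vt_Cons)
        ultimately show False by simp
      qed
      have r1: "r = [last r]" using True v(1) by (metis append_butlast_last_id append_Nil)
      have e: "P' = []" "x = last r" using Cons.prems(3) 0 True \<open>rs = []\<close> by auto
      show ?thesis using e r1 \<open>rs = []\<close> 0 by simp
    next
      case False
      have e: "P' = butlast r # rs" "x = last r" using Cons.prems(3) 0 False by auto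
      have "vt P'" unfolding e vt_Cons
      proof (intro conjI impI)
        show "butlast r \<noteq> []" by fact
        show "sorted (butlast r)" using v(2) by (simp add: sorted_butlast)
        show "vt rs" by fact
        assume "rs \<noteq> []"
        then have "length (hd rs) < length r" using Cons.prems(2) 0 by (cases rs) (auto simp: corner_def shape_def)
        then show "crel (butlast r) (hd rs)" using v(4)[OF \<open>rs \<noteq> []\<close>] by (auto simp: crel_def nth_butlast)
      qed
      then show ?thesis using e rx 0 by simp
    qed
  next
    case (Suc k')
    obtain rs' y where rd: "rs_delete rs k' = (rs', y)" by fastforce
    obtain r' x' where ub: "unbump r y = (r', x')" by fastforce
    have e: "P' = r' # rs'" "x = x'" using Cons.prems(3) Suc rd ub by auto
    have cor: "corner (shape rs) k'" using Cons.prems(2) Suc by (auto simp: corner_def shape_def)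
    from Cons.IH[OF v(3) cor rd] have IH: "vt rs'" "rs_insert rs' y = (rs, k')" by auto
    have rsne: "rs \<noteq> []" using cor by (auto simp: corner_def shape_def)
    obtain c where c: "c < length (hd rs)" "hd rs ! c = y" using ins_hd_mem[OF IH(2)] by blast
    have "r!0 < y"
    proof -
      have "r!c < y" using v(4)[OF rsne] c by (auto simp: crel_def)
      moreover have "c < length r" using v(4)[OF rsne] c by (auto simp: crel_def)
      ultimately show ?thesis using sorted_nth_mono'[OF v(2), of 0 c] by simp
    qed
    from unbump_ok[OF v(2) v(1) this ub] have u: "row_bump r' x' = (r, Some y)" "sorted r'" "length r' = length r"
      by auto
    have "vt P'" unfolding e vt_Cons
    proof (intro conjI impI)
      show "r' \<noteq> []" using u v by auto
      show "sorted r'" by fact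
      show "vt rs'" by fact
      assume "rs' \<noteq> []"
      then obtain b where "row_bump (hd rs') y = (hd rs, b)" using ins_hd[OF IH(2)]
        by (metis prod.collapse)
      moreover have "sorted (hd rs')" using IH(1) \<open>rs' \<noteq> []\<close> by (cases rs') (auto simp: vt_Cons)
      ultimately show "crel r' (hd rs')" using rev_L1[OF v(4)[OF rsne] u(2) _ u(1)] by blast
    qed
    moreover have "rs_insert P' x = (r # rs, k)" using e u IH Suc by simp
    ultimately show ?thesis by simp
  qed
qed

lemma rsk_Nil: "rsk [] = ([], [])" by (simp add: rsk_def)

lemma rsk_snoc: "rsk (a @ [x]) = rsk_step (rsk a) (Suc (length a), x)"
proof -
  have u: "[1..<length (a @ [x]) + 1] = [1..<length a + 1] @ [Suc (length a)]" by simp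
  have l: "length [1..<length a + 1] = length a" by (simp only: length_upt)
  have z: "zip ([1..<length a + 1] @ [Suc (length a)]) (a @ [x]) = zip [1..<length a + 1] a @ zip [Suc (length a)] [x]"
    by (rule zip_append[OF l])
  show ?thesis unfolding rsk_def u z by simp
qed

lemma rsk_snoc': "rs_insert (fst (rsk a)) x = (P', k) \<Longrightarrow> rsk (a @ [x]) = (P', add_to_row (snd (rsk a)) k (Suc (length a)))"
  by (cases "rsk a") (simp add: rsk_snoc rsk_step_def)

lemma atr_Cons_Suc: "add_to_row (r # Q) (Suc k) v = r # add_to_row Q k v"
  by (auto simp: add_to_row_def)
lemma atr_Cons_0: "add_to_row (r # Q) 0 v = (r @ [v]) # Q"
  by (auto simp: add_to_row_def)
lemma atr_Nil: "add_to_row [] k v = [[v]]"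
  by (auto simp: add_to_row_def)

lemma shape_atr: "shape (add_to_row Q k v) = addc (shape Q) k"
  by (auto simp: add_to_row_def addc_def shape_def map_update)

lemma mset_atr: "mset (concat (add_to_row Q k v)) = mset (concat Q) + {#v#}"
proof (induction Q arbitrary: k)
  case Nil then show ?case by (simp add: atr_Nil)
next
  case (Cons r Q) then show ?case by (cases k) (auto simp: atr_Cons_0 atr_Cons_Suc)
qed

lemma set_atr: "set (concat (add_to_row Q k v)) = insert v (set (concat Q))"
  using mset_atr[of Q k v] by (metis set_mset_mset set_mset_add_mset_insert add_mset_add_single)

definition rinv :: "nat list \<Rightarrow> bool" where
  "rinv a \<longleftrightarrow> vt (fst (rsk a)) \<and> shape (snd (rsk a)) = shape (fst (rsk a)) \<and>
     mset (concat (fst (rsk a))) = mset a \<and> set (concat (snd (rsk a))) \<subseteq> {1..length a}"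

lemma rinv: "rinv a"
proof (induction a rule: rev_induct)
  case Nil then show ?case by (simp add: rinv_def rsk_Nil shape_def)
next
  case (snoc x a)
  obtain P' k where ri: "rs_insert (fst (rsk a)) x = (P', k)" by fastforce
  have e: "rsk (a @ [x]) = (P', add_to_row (snd (rsk a)) k (Suc (length a)))" using rsk_snoc'[OF ri] .
  from ins_vt[OF _ ri] snoc have iv: "vt P'" "shape P' = addc (shape (fst (rsk a))) k"
    "mset (concat P') = mset (concat (fst (rsk a))) + {#x#}" by (auto simp: rinv_def)
  have "set (concat (add_to_row (snd (rsk a)) k (Suc (length a)))) \<subseteq> {1..length (a@[x])}"
    unfolding set_atr using snoc by (auto simp: rinv_def)
  then show ?case using snoc iv unfolding rinv_def e by (simp add: shape_atr)
qed

lemma vt_ne: "vt P \<Longrightarrow> r \<in> set P \<Longrightarrow> r \<noteq> []"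
  by (induction P rule: vt.induct) auto
lemma vt_sorted: "vt P \<Longrightarrow> r \<in> set P \<Longrightarrow> sorted r"
  by (induction P rule: vt.induct) auto

lemma shape_ne: "shape P = shape Q \<Longrightarrow> (\<forall>r\<in>set P. r \<noteq> []) \<Longrightarrow> (\<forall>r\<in>set Q. r \<noteq> [])"
proof (intro ballI)
  fix r assume "shape P = shape Q" "\<forall>r\<in>set P. r \<noteq> []" "r \<in> set Q"
  then obtain i where i: "i < length Q" "Q!i = r" by (auto simp: in_set_conv_nth)
  have lP: "length P = length Q" using \<open>shape P = shape Q\<close> unfolding shape_def by (metis length_map)
  then have "length (P!i) = length r" "i < length P" using \<open>shape P = shape Q\<close> i
    by (auto simp: shape_def) (metis nth_map)
  then show "r \<noteq> []" using \<open>\<forall>r\<in>set P. r \<noteq> []\<close> by (auto dest: nth_mem)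
qed

lemma atr_mem_row:
  assumes "\<forall>r\<in>set Q. r \<noteq> []" "N \<notin> set (concat Q)" "k \<le> length Q" "i < length (add_to_row Q k N)"
  shows "N \<in> set (add_to_row Q k N ! i) \<longleftrightarrow> i = k"
  using assms by (auto simp: add_to_row_def nth_list_update nth_append)

lemma atr_len: "k \<le> length Q \<Longrightarrow> k < length (add_to_row Q k N)"
  by (auto simp: add_to_row_def)

lemma atr_inj:
  assumes "\<forall>r\<in>set Q. r \<noteq> []" "N \<notin> set (concat Q)" "k \<le> length Q"
    "\<forall>r\<in>set Q'. r \<noteq> []" "N \<notin> set (concat Q')" "k' \<le> length Q'"
    "add_to_row Q k N = add_to_row Q' k' N"
  shows "k = k' \<and> Q = Q'"
proof -
  have kk: "k = k'"
    using atr_mem_row[OF assms(1-3), of k] atr_mem_row[OF assms(4-6), of k] atr_len[OF assms(3)]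
      atr_len[OF assms(6)] assms(7) by metis
  show ?thesis
  proof (cases "k < length Q")
    case True
    show ?thesis
    proof (cases "k < length Q'")
      case True
      have l: "length Q = length Q'" using assms(7) \<open>k < length Q\<close> True by (metis add_to_row_def kk length_list_update)
      have "Q = Q'"
      proof (rule nth_equalityI)
        show "length Q = length Q'" by fact
        fix i assume i: "i < length Q"
        have "add_to_row Q k N ! i = add_to_row Q' k N ! i" using assms(7) kk by simp
        then show "Q!i = Q'!i" using i l \<open>k < length Q\<close> True kk
          by (cases "i = k") (auto simp: add_to_row_def nth_list_update)
      qed
      then show ?thesis using kk by simp
    next
      case False
      then have k': "k = length Q'" using assms(6) kk by simp
      have "Q[k := Q!k @ [N]] = Q' @ [[N]]" using assms(7) \<open>k < length Q\<close> False kk by (simp add: add_to_row_def)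
      then have "length Q = Suc (length Q')" "Q!k @ [N] = [N]"
        by (metis length_list_update length_append_singleton, metis k' \<open>k < length Q\<close> nth_list_update_eq nth_append_length)
      then have "Q!k = []" by simp
      then show ?thesis using assms(1) \<open>k < length Q\<close> by (auto dest: nth_mem)
    qed
  next
    case False
    then have k: "k = length Q" using assms(3) by simp
    show ?thesis
    proof (cases "k < length Q'")
      case True
      have "Q'[k := Q'!k @ [N]] = Q @ [[N]]" using assms(7) False True kk by (simp add: add_to_row_def)
      then have "length Q' = Suc (length Q)" "Q'!k @ [N] = [N]"
        by (metis length_list_update length_append_singleton, metis k True nth_list_update_eq nth_append_length)
      then have "Q'!k = []" by simp
      then show ?thesis using assms(4) True by (auto dest: nth_mem)
    next
      case False
      then show ?thesis using assms(7) \<open>\<not> k < length Q\<close> kk by (simp add: add_to_row_def)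
    qed
  qed
qed

lemma rsk_inj: "length a = length b \<Longrightarrow> rsk a = rsk b \<Longrightarrow> a = b"
proof (induction a arbitrary: b rule: rev_induct)
  case Nil then show ?case by simp
next
  case (snoc x a)
  obtain b' y where b: "b = b' @ [y]" using snoc.prems(1) by (cases b rule: rev_cases) auto
  have lb: "length b' = length a" using snoc.prems(1) b by simp
  obtain P1 k where r1: "rs_insert (fst (rsk a)) x = (P1, k)" by fastforce
  obtain P2 k2 where r2: "rs_insert (fst (rsk b')) y = (P2, k2)" by fastforce
  have e1: "rsk (a @ [x]) = (P1, add_to_row (snd (rsk a)) k (Suc (length a)))" using rsk_snoc'[OF r1] .
  have e2: "rsk (b' @ [y]) = (P2, add_to_row (snd (rsk b')) k2 (Suc (length a)))" using rsk_snoc'[OF r2] lb by simp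
  have ia: "rinv a" and ib: "rinv b'" by (rule rinv)+
  have k1: "k \<le> length (snd (rsk a))" using ins_vt[OF _ r1] ia by (auto simp: rinv_def shape_def dest: arg_cong[of _ _ length])
  have k2: "k2 \<le> length (snd (rsk b'))" using ins_vt[OF _ r2] ib by (auto simp: rinv_def shape_def dest: arg_cong[of _ _ length])
  have ne1: "\<forall>r\<in>set (snd (rsk a)). r \<noteq> []" using ia shape_ne vt_ne unfolding rinv_def by metis
  have ne2: "\<forall>r\<in>set (snd (rsk b')). r \<noteq> []" using ib shape_ne vt_ne unfolding rinv_def by metis
  have N1: "Suc (length a) \<notin> set (concat (snd (rsk a)))" using ia by (auto simp: rinv_def)
  have N2: "Suc (length a) \<notin> set (concat (snd (rsk b')))" using ib lb by (auto simp: rinv_def)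
  have eq: "P1 = P2" "add_to_row (snd (rsk a)) k (Suc (length a)) = add_to_row (snd (rsk b')) k2 (Suc (length a))"
    using snoc.prems(2) e1 e2 b by auto
  from atr_inj[OF ne1 N1 k1 ne2 N2 k2 eq(2)] have q: "k = k2" "snd (rsk a) = snd (rsk b')" by auto
  have "shape (fst (rsk a)) = shape (fst (rsk b'))" using ia ib q by (simp add: rinv_def)
  then have "fst (rsk a) = fst (rsk b') \<and> x = y"
    using ins_inj[of "fst (rsk a)" "fst (rsk b')" x P1 k y] ia ib r1 r2 eq q by (simp add: rinv_def)
  then have "rsk a = rsk b' \<and> x = y" using q by (simp add: prod_eq_iff)
  then show ?case using snoc.IH[OF lb[symmetric]] b by simp
qed

fun remc :: "nat list list \<Rightarrow> nat \<Rightarrow> nat list list" where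
  "remc [] k = []"
| "remc (r # rs) 0 = (if butlast r = [] then rs else butlast r # rs)"
| "remc (r # rs) (Suc k) = r # remc rs k"

lemma corner0:
  assumes "vt (r # rs)" "corner (shape (r # rs)) 0" "butlast r = []" shows "rs = []"
proof (rule ccontr)
  assume "rs \<noteq> []"
  then have "length (hd rs) < length r" using assms(2) by (cases rs) (auto simp: corner_def shape_def)
  moreover have "r \<noteq> []" using assms(1) by (simp add: vt_Cons)
  then have "length r = 1" using assms(3) by (cases r rule: rev_cases) auto
  moreover have "hd rs \<noteq> []" using \<open>rs \<noteq> []\<close> assms(1) by (cases rs) (auto simp: vt_Cons)
  ultimately show False by simp
qed

lemma corner_Suc: "corner (shape (r # rs)) (Suc k) = corner (shape rs) k"
  by (auto simp: corner_def shape_def)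

lemma crel_butlast: "crel r s \<Longrightarrow> crel r (butlast s)"
  by (auto simp: crel_def nth_butlast)

lemma remc_atr:
  "vt T \<Longrightarrow> corner (shape T) k \<Longrightarrow> last (T!k) = N \<Longrightarrow> add_to_row (remc T k) k N = T"
proof (induction T arbitrary: k)
  case Nil then show ?case by (simp add: corner_def shape_def)
next
  case (Cons r rs)
  have rne: "r \<noteq> []" using Cons.prems(1) by (simp add: vt_Cons)
  show ?case
  proof (cases k)
    case 0
    show ?thesis
    proof (cases "butlast r = []")
      case True
      then have "rs = []" using corner0 Cons.prems 0 by blast
      moreover have "r = [N]" using True rne Cons.prems(3) 0
        by (metis append_butlast_last_id append_Nil nth_Cons_0)
      ultimately show ?thesis using 0 True by (simp add: atr_Nil)
    next
      case False
      have "butlast r @ [N] = r" using rne Cons.prems(3) 0 by (metis append_butlast_last_id nth_Cons_0)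
      then show ?thesis using 0 False by (simp add: atr_Cons_0)
    qed
  next
    case (Suc k')
    then show ?thesis using Cons.IH[of k'] Cons.prems by (simp add: atr_Cons_Suc corner_Suc vt_Cons)
  qed
qed

lemma hd_remc:
  assumes "vt rs" "corner (shape rs) k" "remc rs k \<noteq> []"
  shows "hd (remc rs k) = hd rs \<or> hd (remc rs k) = butlast (hd rs)"
proof (cases rs)
  case Nil then show ?thesis using assms by simp
next
  case (Cons s ss)
  show ?thesis
  proof (cases k)
    case 0
    then show ?thesis using Cons assms corner0[of s ss] by (cases "butlast s = []") auto
  next
    case (Suc k') then show ?thesis using Cons by simp
  qed
qed

lemma vt_remc: "vt T \<Longrightarrow> corner (shape T) k \<Longrightarrow> vt (remc T k)"
proof (induction T arbitrary: k)
  case Nil then show ?case by simp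
next
  case (Cons r rs)
  have v: "r \<noteq> []" "sorted r" "vt rs" "rs \<noteq> [] \<Longrightarrow> crel r (hd rs)"
    using Cons.prems(1) vt_Cons by auto
  show ?case
  proof (cases k)
    case 0
    show ?thesis
    proof (cases "butlast r = []")
      case True
      then have "rs = []" using corner0 Cons.prems 0 by blast
      then show ?thesis using 0 True by simp
    next
      case False
      show ?thesis unfolding 0 remc.simps if_not_P[OF False] vt_Cons
      proof (intro conjI impI)
        show "butlast r \<noteq> []" by fact
        show "sorted (butlast r)" using v(2) by (simp add: sorted_butlast)
        show "vt rs" by fact
        assume "rs \<noteq> []"
        then have "length (hd rs) < length r" using Cons.prems(2) 0 by (cases rs) (auto simp: corner_def shape_def)
        then show "crel (butlast r) (hd rs)" using v(4)[OF \<open>rs \<noteq> []\<close>] by (auto simp: crel_def nth_butlast)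
      qed
    qed
  next
    case (Suc k')
    have cor: "corner (shape rs) k'" using Cons.prems(2) Suc corner_Suc by simp
    have rsne: "rs \<noteq> []" using cor by (auto simp: corner_def shape_def)
    show ?thesis unfolding Suc remc.simps vt_Cons
    proof (intro conjI impI)
      show "r \<noteq> []" "sorted r" by (fact v(1), fact v(2))
      show "vt (remc rs k')" using Cons.IH[OF v(3) cor] .
      assume "remc rs k' \<noteq> []"
      then show "crel r (hd (remc rs k'))" using hd_remc[OF v(3) cor] v(4)[OF rsne] crel_butlast by metis
    qed
  qed
qed

lemma addc_inj:
  assumes "0 \<notin> set sh" "0 \<notin> set sh'" "addc sh k = addc sh' k" shows "sh = sh'"
proof (cases "k < length sh")
  case True
  show ?thesis
  proof (cases "k < length sh'")
    case True
    have e: "sh[k := sh!k+1] = sh'[k := sh'!k+1]" using assms(3) \<open>k < length sh\<close> True by (simp add: addc_def)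
    then have l: "length sh = length sh'" by (metis length_list_update)
    show ?thesis
    proof (rule nth_equalityI)
      show "length sh = length sh'" by fact
      fix i assume i: "i < length sh"
      have "sh[k := sh!k+1] ! i = sh'[k := sh'!k+1] ! i" using e by simp
      then show "sh!i = sh'!i" using i l True by (cases "i = k") auto
    qed
  next
    case False
    have e: "sh[k := sh!k+1] = sh' @ [1]" using assms(3) \<open>k < length sh\<close> False by (simp add: addc_def)
    then have l: "length sh = Suc (length sh')" by (metis length_list_update length_append_singleton)
    then have k: "k = length sh'" using False \<open>k < length sh\<close> by simp
    have "sh[k := sh!k+1] ! k = 1" using e k by simp
    then have "sh!k = 0" using \<open>k < length sh\<close> by simp
    then show ?thesis using assms(1) \<open>k < length sh\<close> by (metis nth_mem)
  qed
next
  case False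
  show ?thesis
  proof (cases "k < length sh'")
    case True
    have e: "sh'[k := sh'!k+1] = sh @ [1]" using assms(3) \<open>\<not> k < length sh\<close> True by (simp add: addc_def)
    then have l: "length sh' = Suc (length sh)" by (metis length_list_update length_append_singleton)
    then have k: "k = length sh" using False True by simp
    have "sh'[k := sh'!k+1] ! k = 1" using e k by simp
    then have "sh'!k = 0" using True by simp
    then show ?thesis using assms(2) True by (metis nth_mem)
  next
    case False
    then show ?thesis using assms(3) \<open>\<not> k < length sh\<close> by (simp add: addc_def)
  qed
qed

lemma vt_crel_nth: "vt T \<Longrightarrow> Suc i < length T \<Longrightarrow> crel (T!i) (T!Suc i)"
proof (induction T arbitrary: i rule: vt.induct)
  case (3 r1 r2 rs)
  then show ?case by (cases i) auto
qed auto

lemma sorted_le_last: "sorted r \<Longrightarrow> x \<in> set r \<Longrightarrow> x \<le> last r"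
  by (induction r) (auto simp: sorted_append)

lemma zero_notin_shape: "vt P \<Longrightarrow> 0 \<notin> set (shape P)"
  using vt_ne by (auto simp: shape_def)

lemma rsk_surj:
  "vt T \<Longrightarrow> mset (concat T) = mset [1..<n+1] \<Longrightarrow> vt P \<Longrightarrow> shape P = shape T
   \<Longrightarrow> \<exists>a. length a = n \<and> rsk a = (P, T)"
proof (induction n arbitrary: P T)
  case 0
  then have "concat T = []" by simp
  then have "T = []" using vt_ne[OF 0(1)] by (cases T) auto
  then have "P = []" using 0(4) by (simp add: shape_def)
  then show ?case using \<open>T = []\<close> by (intro exI[of _ "[]"]) (simp add: rsk_Nil)
next
  case (Suc n)
  define N where "N = Suc n"
  have "set (concat T) = set [1..<Suc n + 1]" using Suc.prems(2) by (metis set_mset_mset)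
  then have setT: "set (concat T) = {1..N}" unfolding N_def by auto
  then have "N \<in> set (concat T)" unfolding N_def by simp
  then obtain row where row: "row \<in> set T" "N \<in> set row" by auto
  then obtain k where k: "k < length T" "N \<in> set (T!k)" by (metis in_set_conv_nth)
  have srt: "sorted (T!k)" using vt_sorted[OF Suc.prems(1)] k by simp
  have lastN: "last (T!k) = N"
  proof -
    have "N \<le> last (T!k)" using sorted_le_last[OF srt k(2)] .
    moreover have "T!k \<noteq> []" using k by auto
    then have "last (T!k) \<in> set (concat T)" using k by (auto intro!: bexI[of _ "T!k"])
    then have "last (T!k) \<le> N" using setT by auto
    ultimately show ?thesis by simp
  qed
  have cor: "corner (shape T) k"
    unfolding corner_def
  proof (intro conjI impI)
    show "k < length (shape T)" using k by (simp add: shape_def)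
    assume a: "Suc k < length (shape T)"
    then have cr: "crel (T!k) (T!Suc k)" using vt_crel_nth[OF Suc.prems(1)] by (simp add: shape_def)
    show "shape T ! Suc k < shape T ! k"
    proof (rule ccontr)
      assume "\<not> ?thesis"
      then have le: "length (T!k) \<le> length (T!Suc k)" using a by (simp add: shape_def)
      have ne: "T!k \<noteq> []" using k by auto
      define j where "j = length (T!k) - 1"
      have j: "j < length (T!Suc k)" "j < length (T!k)" proof -
        have "0 < length (T!k)" using ne by simp
        then show "j < length (T!Suc k)" "j < length (T!k)" using le unfolding j_def by linarith+
      qed
      have "T!k!j = N" using lastN ne unfolding j_def by (simp add: last_conv_nth)
      moreover have "T!k!j < T!Suc k!j" using cr j by (auto simp: crel_def)
      moreover have "T!Suc k!j \<in> set (concat T)" using j a by (auto simp: shape_def intro!: bexI[of _ "T!Suc k"])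
      then have "T!Suc k!j \<le> N" using setT by (metis atLeastAtMost_iff)
      ultimately show False by simp
    qed
  qed
  define T' where "T' = remc T k"
  have vT': "vt T'" unfolding T'_def using vt_remc[OF Suc.prems(1) cor] .
  have aT: "add_to_row T' k N = T" unfolding T'_def using remc_atr[OF Suc.prems(1) cor lastN] .
  have mT': "mset (concat T') = mset [1..<n+1]"
    using mset_atr[of T' k N] Suc.prems(2) aT unfolding N_def by simp
  have corP: "corner (shape P) k" using cor Suc.prems(4) by simp
  obtain P' x where rd: "rs_delete P k = (P', x)" by fastforce
  from del_ok[OF Suc.prems(3) corP rd] have d: "vt P'" "rs_insert P' x = (P, k)" by auto
  from ins_vt[OF d] have "shape P = addc (shape P') k" by simp
  moreover have "shape T = addc (shape T') k" using aT shape_atr by metis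
  ultimately have "shape P' = shape T'"
    using addc_inj[OF zero_notin_shape[OF d(1)] zero_notin_shape[OF vT']] Suc.prems(4) by metis
  from Suc.IH[OF vT' mT' d(1) this] obtain a where a: "length a = n" "rsk a = (P', T')" by blast
  have "rsk (a @ [x]) = (P, add_to_row T' k (Suc n))" using rsk_snoc'[of a x P k] a d(2) by simp
  then show ?case using aT a unfolding N_def by (intro exI[of _ "a @ [x]"]) simp
qed

fun Jt :: "(nat \<Rightarrow> nat) \<Rightarrow> nat list list \<Rightarrow> bool" where
  "Jt L [] = True"
| "Jt L (r # rs) = (Jt L rs \<and> (\<forall>u\<in>set r. \<forall>v\<in>set (concat rs). L u = L v \<longrightarrow> v < u))"

lemma rb_sim:
  "(\<forall>y\<in>set r. x < y \<longleftrightarrow> L x < L y) \<Longrightarrow> row_bump r x = (r', b) \<Longrightarrow>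
   row_bump (map L r) (L x) = (map L r', map_option L b)"
proof (induction r arbitrary: r' b)
  case Nil then show ?case by auto
next
  case (Cons y ys)
  show ?case
  proof (cases "x < y")
    case True
    have "r' = x # ys" "b = Some y" using Cons.prems(2) True by auto
    moreover have "L x < L y" using Cons.prems(1) True by simp
    ultimately show ?thesis by simp
  next
    case False
    obtain ys' b' where rb: "row_bump ys x = (ys', b')" by fastforce
    have h: "\<forall>y\<in>set ys. x < y \<longleftrightarrow> L x < L y" using Cons.prems(1) by simp
    have i: "row_bump (map L ys) (L x) = (map L ys', map_option L b')" using Cons.IH[OF h rb] .
    have "r' = y # ys'" "b = b'" using Cons.prems(2) False rb by auto
    moreover have "\<not> L x < L y" using Cons.prems(1) False by simp
    ultimately show ?thesis using i by simp
  qed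
qed

lemma mset_ins: "rs_insert P x = (P', k) \<Longrightarrow> mset (concat P') = mset (concat P) + {#x#}"
proof (induction P arbitrary: x P' k)
  case Nil then show ?case by auto
next
  case (Cons r rs)
  obtain r' b where rb: "row_bump r x = (r', b)" by fastforce
  show ?case
  proof (cases b)
    case None
    then have "r' = r @ [x]" "P' = r' # rs" using Cons.prems rb rb_none by auto
    then show ?thesis by simp
  next
    case (Some y)
    obtain rs' k' where ri: "rs_insert rs y = (rs', k')" by fastforce
    have e: "P' = r' # rs'" using Cons.prems rb Some ri by auto
    from rb_some rb Some obtain c where c: "c<length r" "r' = r[c:=x]" "y = r!c" by blast
    show ?thesis using Cons.IH[OF ri] e c by (simp add: mset_update)
  qed
qed

lemma ins_sim:
  assumes "\<forall>u\<in>D. \<forall>v\<in>D. u \<le> v \<longrightarrow> L u \<le> L v"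
  shows "set (concat P) \<subseteq> D \<Longrightarrow> x \<in> D \<Longrightarrow> distinct (concat P) \<Longrightarrow> Jt L P \<Longrightarrow>
    (\<forall>z\<in>set (concat P). L z = L x \<longrightarrow> z < x) \<Longrightarrow> (\<forall>r\<in>set P. sorted r) \<Longrightarrow>
    rs_insert P x = (P', k) \<Longrightarrow>
    rs_insert (map (map L) P) (L x) = (map (map L) P', k) \<and> Jt L P'"
proof (induction P arbitrary: x P' k)
  case Nil then show ?case by auto
next
  case (Cons r rs)
  have mono: "\<And>u v. u \<in> D \<Longrightarrow> v \<in> D \<Longrightarrow> u \<le> v \<Longrightarrow> L u \<le> L v" using assms by blast
  have rD: "set r \<subseteq> D" using Cons.prems(1) by auto
  have cmp: "\<forall>y\<in>set r. x < y \<longleftrightarrow> L x < L y"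
  proof
    fix y assume y: "y \<in> set r"
    have yD: "y \<in> D" using rD y by auto
    show "x < y \<longleftrightarrow> L x < L y"
    proof
      assume "x < y"
      then have "L x \<le> L y" using mono[OF Cons.prems(2) yD] by simp
      moreover have "L x \<noteq> L y"
      proof
        assume "L x = L y"
        then have "y < x" using Cons.prems(5) y by simp
        then show False using \<open>x < y\<close> by simp
      qed
      ultimately show "L x < L y" by simp
    next
      assume a: "L x < L y"
      show "x < y"
      proof (rule ccontr)
        assume "\<not> x < y"
        then have "L y \<le> L x" using mono[OF yD Cons.prems(2)] by simp
        then show False using a by simp
      qed
    qed
  qed
  obtain r' b where rb: "row_bump r x = (r', b)" by fastforce
  have simr: "row_bump (map L r) (L x) = (map L r', map_option L b)" using rb_sim[OF cmp rb] .
  have Jr: "Jt L rs" "\<forall>u\<in>set r. \<forall>v\<in>set (concat rs). L u = L v \<longrightarrow> v < u" using Cons.prems(4) by auto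
  show ?case
  proof (cases b)
    case None
    then have e: "P' = r' # rs" "k = 0" "r' = r @ [x]" using Cons.prems(7) rb rb_none by auto
    have "rs_insert (map (map L) (r # rs)) (L x) = (map (map L) P', k)" using simr None e by simp
    moreover have "Jt L P'" using e Jr Cons.prems(5) by auto
    ultimately show ?thesis by simp
  next
    case (Some y)
    obtain rs' k' where ri: "rs_insert rs y = (rs', k')" by fastforce
    have e: "P' = r' # rs'" "k = Suc k'" using Cons.prems(7) rb Some ri by auto
    from rb_some rb Some obtain c where c: "c<length r" "r' = r[c:=x]" "y = r!c"
      "\<forall>j<c. r!j \<le> x" "x < r!c" by blast
    have yr: "y \<in> set r" using c by simp
    have IH: "rs_insert (map (map L) rs) (L y) = (map (map L) rs', k') \<and> Jt L rs'"
    proof (rule Cons.IH[OF _ _ _ Jr(1) _ _ ri])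
      show "set (concat rs) \<subseteq> D" using Cons.prems(1) by auto
      show "y \<in> D" using rD yr by auto
      show "distinct (concat rs)" using Cons.prems(3) by simp
      show "\<forall>z\<in>set (concat rs). L z = L y \<longrightarrow> z < y" using Jr(2) yr by auto
      show "\<forall>r\<in>set rs. sorted r" using Cons.prems(6) by simp
    qed
    have "rs_insert (map (map L) (r # rs)) (L x) = (map (map L) P', k)"
      using simr Some e IH by simp
    moreover have "Jt L P'"
    proof -
      have setrs': "set (concat rs') = insert y (set (concat rs))"
        using mset_ins[OF ri] by (metis set_mset_mset set_mset_add_mset_insert add_mset_add_single)
      have dr: "distinct r" using Cons.prems(3) by simp
      have setr': "set r' = insert x (set r - {y})" using set_update_distinct[OF dr c(1)] c by simp
      have srt: "sorted r" using Cons.prems(6) by simp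
      have small: "\<And>u. u \<in> set r \<Longrightarrow> u < y \<Longrightarrow> u \<le> x"
      proof -
        fix u assume u: "u \<in> set r" "u < y"
        then obtain i where i: "i < length r" "r!i = u" by (auto simp: in_set_conv_nth)
        show "u \<le> x"
        proof (cases "i < c")
          case True then show ?thesis using c i by auto
        next
          case False
          then have "r!c \<le> r!i" using sorted_nth_mono'[OF srt, of c i] i by simp
          then show ?thesis using u i c by simp
        qed
      qed
      have Jx: "\<forall>z\<in>set (concat (r # rs)). L z = L x \<longrightarrow> z < x" using Cons.prems(5) .
      have "\<forall>u\<in>set r'. \<forall>v\<in>set (concat rs'). L u = L v \<longrightarrow> v < u"
      proof (intro ballI impI)
        fix u v assume u: "u \<in> set r'" and v: "v \<in> set (concat rs')" and L: "L u = L v"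
        show "v < u"
        proof (cases "u = x")
          case True
          show ?thesis
          proof (cases "v = y")
            case True
            then have "y < x" using Jx yr L \<open>u = x\<close> by auto
            then show ?thesis using c by simp
          next
            case False
            then have "v \<in> set (concat rs)" using v setrs' by auto
            then show ?thesis using Jx L \<open>u = x\<close> by auto
          qed
        next
          case False
          then have uu: "u \<in> set r" "u \<noteq> y" using u setr' by auto
          show ?thesis
          proof (cases "v = y")
            case False
            then have "v \<in> set (concat rs)" using v setrs' by auto
            then show ?thesis using Jr(2) uu L by auto
          next
            case True
            show ?thesis
            proof (rule ccontr)
              assume "\<not> v < u"
              then have "u < y" using uu True by simp
              then have "u \<le> x" using small uu by simp
              then have "L u \<le> L x" using mono[of u x] rD uu Cons.prems(2) by auto
              moreover have "L x \<le> L y"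
              proof -
                have "y \<in> D" using rD yr by auto
                then show ?thesis using mono[OF Cons.prems(2) \<open>y \<in> D\<close>] c(5) c(3) by simp
              qed
              ultimately have "L x = L y" using L True by simp
              then have "y < x" using Jx yr by auto
              then show False using c by simp
            qed
          qed
        qed
      qed
      then show ?thesis using e IH by simp
    qed
    ultimately show ?thesis by simp
  qed
qed

lemma std_Q:
  fixes w a :: "nat list"
  assumes len: "length w = length a"
    and F1: "\<forall>p<length a. \<forall>q<length a. a!p < a!q \<longrightarrow> w!p < w!q"
    and F2: "\<forall>p q. p < q \<longrightarrow> q < length a \<longrightarrow> a!p = a!q \<longrightarrow> w!p < w!q"
  shows "snd (rsk w) = snd (rsk a)"
proof -
  have dw: "distinct w" unfolding distinct_conv_nth
  proof (intro allI impI)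
    fix i j assume ij: "i < length w" "j < length w" "i \<noteq> j"
    show "w!i \<noteq> w!j"
    proof (cases "a!i = a!j")
      case True
      then show ?thesis using F2 ij len by (metis less_irrefl nat_neq_iff)
    next
      case False
      then show ?thesis using F1 ij len by (metis less_irrefl nat_neq_iff)
    qed
  qed
  define L where "L v = a ! (THE p. p < length w \<and> w!p = v)" for v
  have Lw: "L (w!p) = a!p" if "p < length w" for p
  proof -
    have "(THE q. q < length w \<and> w!q = w!p) = p"
      using that dw by (auto simp: nth_eq_iff_index_eq)
    then show ?thesis unfolding L_def by simp
  qed
  have mono: "\<forall>u\<in>set w. \<forall>v\<in>set w. u \<le> v \<longrightarrow> L u \<le> L v"
  proof (intro ballI impI)
    fix u v assume u: "u \<in> set w" and v: "v \<in> set w" and uv: "u \<le> v"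
    obtain p where p: "p < length w" "w!p = u" using u by (auto simp: in_set_conv_nth)
    obtain q where q: "q < length w" "w!q = v" using v by (auto simp: in_set_conv_nth)
    show "L u \<le> L v"
    proof (rule ccontr)
      assume "\<not> L u \<le> L v"
      then have "a!q < a!p" using Lw p q by auto
      then have "w!q < w!p" using F1 p q len by auto
      then show False using p q uv by simp
    qed
  qed
  have main: "j \<le> length w \<Longrightarrow> fst (rsk (take j a)) = map (map L) (fst (rsk (take j w))) \<and>
      snd (rsk (take j a)) = snd (rsk (take j w)) \<and> Jt L (fst (rsk (take j w)))" for j
  proof (induction j)
    case 0 then show ?case by (simp add: rsk_Nil)
  next
    case (Suc j)
    then have j: "j < length w" by simp
    have IH: "fst (rsk (take j a)) = map (map L) (fst (rsk (take j w)))"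
      "snd (rsk (take j a)) = snd (rsk (take j w))" "Jt L (fst (rsk (take j w)))"
      using Suc by auto
    define Pw where "Pw = fst (rsk (take j w))"
    have ri: "rinv (take j w)" by (rule rinv)
    have vP: "vt Pw" and mP: "mset (concat Pw) = mset (take j w)" using ri unfolding rinv_def Pw_def by auto
    have sP: "set (concat Pw) = set (take j w)" using mP by (metis set_mset_mset)
    obtain P' k where ins: "rs_insert Pw (w!j) = (P', k)" by fastforce
    have sim: "rs_insert (map (map L) Pw) (L (w!j)) = (map (map L) P', k) \<and> Jt L P'"
    proof (rule ins_sim[OF mono _ _ _ _ _ _ ins])
      show "set (concat Pw) \<subseteq> set w" using sP by (metis set_take_subset)
      show "w!j \<in> set w" using j by simp
      show "distinct (concat Pw)" using mP dw by (metis distinct_take mset_eq_imp_distinct_iff)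
      show "Jt L Pw" using IH Pw_def by simp
      show "\<forall>r\<in>set Pw. sorted r" using vt_sorted[OF vP] by blast
      show "\<forall>z\<in>set (concat Pw). L z = L (w!j) \<longrightarrow> z < w!j"
      proof (intro ballI impI)
        fix z assume z: "z \<in> set (concat Pw)" and Lz: "L z = L (w!j)"
        have "z \<in> set (take j w)" using z sP by (metis)
        then obtain i where "i < length (take j w)" "take j w ! i = z" by (metis in_set_conv_nth)
        then have i: "i < j" "z = w!i" using j by auto
        then have "a!i = a!j" using Lz Lw j by simp
        then show "z < w!j" using F2 i j len by simp
      qed
    qed
    have tw: "take (Suc j) w = take j w @ [w!j]" using j by (simp add: take_Suc_conv_app_nth)
    have ta: "take (Suc j) a = take j a @ [a!j]" using j len by (simp add: take_Suc_conv_app_nth)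
    have lj: "length (take j w) = j" "length (take j a) = j" using j len by auto
    have ew: "rsk (take (Suc j) w) = (P', add_to_row (snd (rsk (take j w))) k (Suc j))"
      using rsk_snoc'[OF ins[unfolded Pw_def]] tw lj by simp
    have "rs_insert (fst (rsk (take j a))) (a!j) = (map (map L) P', k)"
      using sim IH(1) Lw[OF j] Pw_def by simp
    then have ea: "rsk (take (Suc j) a) = (map (map L) P', add_to_row (snd (rsk (take j a))) k (Suc j))"
      using rsk_snoc' ta lj by simp
    show ?case using ew ea IH sim by simp
  qed
  from main[of "length w"] show ?thesis using len by simp
qed

lemma count_take_mono: "i \<le> j \<Longrightarrow> count_list (take i xs) c \<le> count_list (take j xs) c"
proof -
  assume "i \<le> j"
  then have "take j xs = take i xs @ drop i (take j xs)"
    by (metis append_take_drop_id min.absorb1 take_take)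
  then show ?thesis by (metis count_list_append le_add1)
qed

lemma sum_take_mono: "i \<le> j \<Longrightarrow> sum_list (take i (xs::nat list)) \<le> sum_list (take j xs)"
proof -
  assume "i \<le> j"
  then have "take j xs = take i xs @ drop i (take j xs)"
    by (metis append_take_drop_id min.absorb1 take_take)
  then show ?thesis by (metis sum_list_append le_add1)
qed

lemma sum_take_Suc: "i < length xs \<Longrightarrow> sum_list (take (Suc i) (xs::nat list)) = sum_list (take i xs) + xs!i"
  by (simp add: take_Suc_conv_app_nth)

lemma shuffle_F:
  assumes a: "a \<in> shuffle_words mu"
  defines "w \<equiv> shuffle_perm mu a"
  shows "length w = length a"
    "\<forall>p<length a. \<forall>q<length a. a!p < a!q \<longrightarrow> w!p < w!q"
    "\<forall>p q. p < q \<longrightarrow> q < length a \<longrightarrow> a!p = a!q \<longrightarrow> w!p < w!q"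
proof -
  have A: "set a \<subseteq> {1..length mu}" "\<forall>i\<in>{1..length mu}. count_list a i = mu ! (i - 1)"
    using a by (auto simp: shuffle_words_def)
  define S where "S i = sum_list (take i mu)" for i
  have wp: "w!p = S (a!p - 1) + count_list (take (Suc p) a) (a!p)" if "p < length a" for p
    using that unfolding w_def shuffle_perm_def S_def by simp
  show "length w = length a" unfolding w_def shuffle_perm_def by simp
  have rng: "1 \<le> a!p \<and> a!p \<le> length mu" if "p < length a" for p
    using A(1) that nth_mem by fastforce
  have lo: "S (a!p - 1) < w!p" if "p < length a" for p
  proof -
    have "a!p \<in> set (take (Suc p) a)" using that by (simp add: take_Suc_conv_app_nth)
    then have "count_list (take (Suc p) a) (a!p) > 0" by (metis count_list_0_iff gr0I)
    then show ?thesis using wp[OF that] by simp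
  qed
  have hi: "w!p \<le> S (a!p)" if "p < length a" for p
  proof -
    have "count_list (take (Suc p) a) (a!p) \<le> count_list (take (length a) a) (a!p)"
      using that by (intro count_take_mono) simp
    also have "\<dots> = mu ! (a!p - 1)" using A(2) rng[OF that] by simp
    finally have "count_list (take (Suc p) a) (a!p) \<le> mu ! (a!p - 1)" .
    moreover have "S (a!p) = S (a!p - 1) + mu ! (a!p - 1)"
    proof -
      have "a!p - 1 < length mu" "Suc (a!p - 1) = a!p" using rng[OF that] by auto
      then show ?thesis using sum_take_Suc[of "a!p - 1" mu] unfolding S_def by simp
    qed
    ultimately show ?thesis using wp[OF that] by simp
  qed
  show "\<forall>p<length a. \<forall>q<length a. a!p < a!q \<longrightarrow> w!p < w!q"
  proof (intro allI impI)
    fix p q assume pq: "p < length a" "q < length a" "a!p < a!q"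
    have "S (a!p) \<le> S (a!q - 1)" unfolding S_def using pq by (intro sum_take_mono) simp
    then show "w!p < w!q" using hi[OF pq(1)] lo[OF pq(2)] by simp
  qed
  show "\<forall>p q. p < q \<longrightarrow> q < length a \<longrightarrow> a!p = a!q \<longrightarrow> w!p < w!q"
  proof (intro allI impI)
    fix p q assume pq: "p < q" "q < length a" "a!p = a!q"
    have "count_list (take (Suc p) a) (a!p) \<le> count_list (take q a) (a!p)"
      using pq by (intro count_take_mono) simp
    moreover have "count_list (take (Suc q) a) (a!q) = count_list (take q a) (a!q) + 1"
      using pq by (simp add: take_Suc_conv_app_nth)
    ultimately show "w!p < w!q" using wp[of p] wp[of q] pq by simp
  qed
qed

lemma vt_cols: "vt P \<Longrightarrow> cols_strict P"
  unfolding cols_strict_def using vt_crel_nth by (auto simp: crel_def)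

lemma vt_of:
  "(\<forall>r\<in>set P. r \<noteq> [] \<and> sorted r) \<Longrightarrow> cols_strict P \<Longrightarrow> sorted_wrt (\<ge>) (map length P) \<Longrightarrow> vt P"
proof (induction P rule: vt.induct)
  case (3 r1 r2 rs)
  have "cols_strict (r2 # rs)" using 3(3) unfolding cols_strict_def
    by (metis Suc_less_eq length_Cons nth_Cons_Suc)
  moreover have "\<forall>j<length r2. r1!j < r2!j" using 3(3) unfolding cols_strict_def by force
  ultimately show ?case using 3 by (auto simp: crel_def)
qed auto

lemma card_W:
  assumes "is_composition mu n"
  shows "card (shuffle_words mu) = multinomial mu"
proof -
  define m where "m = length mu"
  define M where "M = (\<Sum>i<m. replicate_mset (mu!i) (Suc i))"
  have cM: "count M v = (if 1 \<le> v \<and> v \<le> m then mu!(v-1) else 0)" for v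
  proof -
    have "count M v = (\<Sum>i<m. if Suc i = v then mu!i else 0)"
      unfolding M_def by (auto simp: count_sum intro!: sum.cong)
    also have "\<dots> = (\<Sum>i\<in>{..<m} \<inter> {v-1}. if Suc i = v then mu!i else 0)"
      by (rule sum.mono_neutral_right) auto
    also have "\<dots> = (if 1 \<le> v \<and> v \<le> m then mu!(v-1) else 0)"
      by (cases "1 \<le> v \<and> v \<le> m") (auto simp: Int_insert_right)
    finally show ?thesis .
  qed
  have sizeM: "size M = sum_list mu"
    unfolding M_def m_def by (simp add: sum_list_sum_nth atLeast0LessThan)
  have W: "shuffle_words mu = permutations_of_multiset M"
  proof (intro set_eqI iffI)
    fix a assume a: "a \<in> shuffle_words mu"
    have "mset a = M"
    proof (rule multiset_eqI)
      fix v
      show "count (mset a) v = count M v"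
      proof (cases "1 \<le> v \<and> v \<le> m")
        case True then show ?thesis using a cM by (auto simp: shuffle_words_def count_mset m_def)
      next
        case False
        then have "v \<notin> set a" using a by (auto simp: shuffle_words_def m_def)
        then have "count (mset a) v = 0" by simp
        moreover have "count M v = 0" using cM[of v] False by presburger
        ultimately show ?thesis by simp
      qed
    qed
    then show "a \<in> permutations_of_multiset M" by (rule permutations_of_multisetI)
  next
    fix a assume "a \<in> permutations_of_multiset M"
    then have a: "mset a = M" by (rule permutations_of_multisetD)
    have "length a = sum_list mu" using sizeM a by (metis size_mset)
    moreover have "set a \<subseteq> {1..length mu}"
    proof
      fix v assume "v \<in> set a"
      then have "count M v > 0" using a by (metis count_mset_0_iff neq0_conv)
      then show "v \<in> {1..length mu}" using cM[of v] by (auto simp: m_def split: if_splits)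
    qed
    moreover have "\<forall>i\<in>{1..length mu}. count_list a i = mu ! (i - 1)"
      using a cM by (auto simp: m_def simp flip: count_mset)
    ultimately show "a \<in> shuffle_words mu" by (simp add: shuffle_words_def)
  qed
  have pos: "\<forall>i<m. 0 < mu!i" using assms by (auto simp: is_composition_def m_def)
  have setM: "set_mset M = Suc ` {..<m}"
  proof (intro set_eqI iffI)
    fix v assume "v \<in># M"
    then have "count M v > 0" by simp
    then have "1 \<le> v \<and> v \<le> m" using cM[of v] by (auto split: if_splits)
    then show "v \<in> Suc ` {..<m}" by (auto intro!: image_eqI[of _ _ "v - 1"])
  next
    fix v assume "v \<in> Suc ` {..<m}"
    then have "count M v > 0" using cM[of v] pos by auto
    then show "v \<in># M" by simp
  qed
  have "(\<Prod>x\<in>set_mset M. fact (count M x) :: nat) = (\<Prod>i<m. fact (count M (Suc i)) :: nat)"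
    unfolding setM by (subst prod.reindex) auto
  also have "\<dots> = (\<Prod>i<m. fact (mu!i) :: nat)" using cM by simp
  also have "\<dots> = prod_list (map fact mu)"
    unfolding m_def by (simp add: prod.list_conv_set_nth atLeast0LessThan)
  finally have pr: "(\<Prod>x\<in>set_mset M. fact (count M x) :: nat) = prod_list (map fact mu)" .
  show ?thesis unfolding W card_permutations_of_multiset(1) pr sizeM multinomial_def by simp
qed

lemma SSYT_ne: "shape P = lam \<Longrightarrow> (\<forall>x\<in>set lam. 0 < x) \<Longrightarrow> r \<in> set P \<Longrightarrow> r \<noteq> []"
  unfolding shape_def by auto

theorem lemma7p4:
  fixes mu lam :: "nat list" and T :: "nat list list" and n :: nat
  assumes "is_composition mu n"
    and "is_partition lam n"
    and "is_SYT lam T"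
  shows "shuffle_prob mu T = real (kostka lam mu) / real (multinomial mu)"
proof -
  have smu: "sum_list mu = n" using assms(1) by (simp add: is_composition_def)
  have lp: "\<forall>x\<in>set lam. 0 < x" "sorted_wrt (\<ge>) lam" "sum_list lam = n"
    using assms(2) by (auto simp: is_partition_def)
  have Ts: "shape T = lam" "\<forall>r\<in>set T. sorted_wrt (<) r" "cols_strict T"
    "mset (concat T) = mset [1..<n + 1]"
    using assms(3) lp(3) by (auto simp: is_SYT_def)
  have vT: "vt T"
  proof (rule vt_of)
    show "\<forall>r\<in>set T. r \<noteq> [] \<and> sorted r" using SSYT_ne[OF Ts(1) lp(1)] Ts(2) strict_sorted_imp_sorted by blast
    show "cols_strict T" by fact
    show "sorted_wrt (\<ge>) (map length T)" using Ts(1) lp(2) by (simp add: shape_def)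
  qed
  define W where "W = shuffle_words mu"
  define X where "X = {a \<in> W. snd (rsk a) = T}"
  have X: "{a \<in> shuffle_words mu. recording_tableau (shuffle_perm mu a) = T} = X"
  proof -
    have "recording_tableau (shuffle_perm mu a) = snd (rsk a)" if "a \<in> shuffle_words mu" for a
      using std_Q[OF shuffle_F[OF that]] by (simp add: recording_tableau_def)
    then show ?thesis unfolding X_def W_def by auto
  qed
  have Wd: "a \<in> W \<longleftrightarrow> length a = n \<and> set a \<subseteq> {1..length mu} \<and> (\<forall>i\<in>{1..length mu}. count_list a i = mu ! (i - 1))" for a
    unfolding W_def shuffle_words_def using smu by simp
  have bij: "bij_betw (\<lambda>a. fst (rsk a)) X {P. is_SSYT lam mu P}"
  proof (rule bij_betwI')
    fix a b assume a: "a \<in> X" and b: "b \<in> X"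
    show "(fst (rsk a) = fst (rsk b)) = (a = b)"
    proof
      assume "fst (rsk a) = fst (rsk b)"
      moreover have "snd (rsk a) = snd (rsk b)" using a b by (simp add: X_def)
      ultimately have "rsk a = rsk b" by (simp add: prod_eq_iff)
      moreover have "length a = length b" using a b Wd by (simp add: X_def)
      ultimately show "a = b" using rsk_inj by blast
    qed simp
  next
    fix a assume a: "a \<in> X"
    have r: "vt (fst (rsk a))" "shape (snd (rsk a)) = shape (fst (rsk a))"
      "mset (concat (fst (rsk a))) = mset a" using rinv[of a] by (auto simp: rinv_def)
    have aW: "a \<in> W" "snd (rsk a) = T" using a by (auto simp: X_def)
    have sa: "set (concat (fst (rsk a))) = set a" using r(3) by (metis set_mset_mset)
    have "is_SSYT lam mu (fst (rsk a))" unfolding is_SSYT_def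
    proof (intro conjI)
      show "shape (fst (rsk a)) = lam" using r(2) aW(2) Ts(1) by simp
      show "\<forall>r\<in>set (fst (rsk a)). sorted r" using vt_sorted[OF r(1)] by blast
      show "cols_strict (fst (rsk a))" using vt_cols[OF r(1)] .
      show "set (concat (fst (rsk a))) \<subseteq> {1..length mu}" using sa aW(1) Wd by simp
      show "\<forall>i\<in>{1..length mu}. count_list (concat (fst (rsk a))) i = mu ! (i - 1)"
        using aW(1) Wd r(3) by (metis count_mset)
    qed
    then show "fst (rsk a) \<in> {P. is_SSYT lam mu P}" by simp
  next
    fix P assume "P \<in> {P. is_SSYT lam mu P}"
    then have P: "shape P = lam" "\<forall>r\<in>set P. sorted r" "cols_strict P" "set (concat P) \<subseteq> {1..length mu}"
      "\<forall>i\<in>{1..length mu}. count_list (concat P) i = mu ! (i - 1)"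
      by (auto simp: is_SSYT_def)
    have vP: "vt P"
    proof (rule vt_of)
      show "\<forall>r\<in>set P. r \<noteq> [] \<and> sorted r" using SSYT_ne[OF P(1) lp(1)] P(2) by blast
      show "cols_strict P" by fact
      show "sorted_wrt (\<ge>) (map length P)" using P(1) lp(2) by (simp add: shape_def)
    qed
    obtain a where a: "length a = n" "rsk a = (P, T)"
      using rsk_surj[OF vT Ts(4) vP] P(1) Ts(1) by auto
    have ma: "mset (concat P) = mset a" using rinv[of a] a(2) by (simp add: rinv_def)
    have "a \<in> W" unfolding Wd
    proof (intro conjI)
      show "length a = n" by fact
      show "set a \<subseteq> {1..length mu}" using P(4) ma by (metis set_mset_mset)
      show "\<forall>i\<in>{1..length mu}. count_list a i = mu ! (i - 1)" using P(5) ma by (metis count_mset)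
    qed
    then have "a \<in> X" using a(2) by (simp add: X_def)
    then show "\<exists>a\<in>X. P = fst (rsk a)" using a(2) by (intro bexI[of _ a]) auto
  qed
  have "card X = kostka lam mu" using bij_betw_same_card[OF bij] by (simp add: kostka_def)
  then show ?thesis
    unfolding shuffle_prob_def X card_W[OF assms(1)] by simp
qed

end
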